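(* Let $\bar u=(u_\beta)_{\beta<\alpha}$ be a densely non-increasing sequence of elements of a linear order $(U,<)$ whose range $\{u_\beta\mid\beta<\alpha\}$ is infinite. Then $\bar u$ can be uniquely factorized as a concatenation $\bar u=\bar v\bar w$ of sequences where the length $\gamma$ of $\bar v$ is a limit ordinal, $\bar v$ is not ultimately constant in $\gamma$, and the range of $\bar w$ is finite.
   Context: Sequences are indexed by countable ordinals; the concatenation $\bar v\bar w$ of $(v_\beta)_{\beta<\gamma}$ and $(w_\beta)_{\beta<\delta}$ is the sequence of length $\gamma+\delta$ equal to $v_\beta$ at $\beta<\gamma$ and to $w_{\beta'}$ at $\gamma+\beta'$. A sequence $(u_\beta)_{\beta<\alpha}$ is constant on $[\gamma,\gamma')$ if $u_\beta=u_\gamma$ for all $\gamma\le\beta<\gamma'$; it is densely non-increasing if for all $\gamma<\gamma'\le\alpha$, either it is constant on $[\gamma,\gamma')$ or there exist $\gamma\le\beta<\beta'<\gamma'$ with $u_\beta>u_{\beta'}$. For a limit ordinal $\gamma\le\alpha$, it is ultimately constant in $\gamma$ if there is $\gamma'<\gamma$ such that it is constant on $[\gamma',\gamma)$. The range of a sequence is the set of its values. *)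

theory Defs
  imports Main "HOL-Library.Countable_Set"
begin

text \<open>Ordinals are modelled as elements of an arbitrary well-ordered type 'i:
  a sequence of length alpha is a function u :: 'i \<Rightarrow> 'u, of which only
  the values on {..<alpha} matter.\<close>

definition const_on :: "('i::wellorder \<Rightarrow> 'u) \<Rightarrow> 'i \<Rightarrow> 'i \<Rightarrow> bool" where
  "const_on u g g' \<longleftrightarrow> (\<forall>b. g \<le> b \<and> b < g' \<longrightarrow> u b = u g)"

definition densely_nonincr :: "('i::wellorder \<Rightarrow> 'u::linorder) \<Rightarrow> 'i \<Rightarrow> bool" where
  "densely_nonincr u a \<longleftrightarrow>
     (\<forall>g g'. g < g' \<and> g' \<le> a \<longrightarrow>
        const_on u g g' \<or> (\<exists>b b'. g \<le> b \<and> b < b' \<and> b' < g' \<and> u b > u b'))"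

definition limit_ord :: "'i::wellorder \<Rightarrow> bool" where
  "limit_ord g \<longleftrightarrow> (\<exists>b. b < g) \<and> (\<forall>b. b < g \<longrightarrow> (\<exists>b'. b < b' \<and> b' < g))"

definition ult_const :: "('i::wellorder \<Rightarrow> 'u) \<Rightarrow> 'i \<Rightarrow> bool" where
  "ult_const u g \<longleftrightarrow> (\<exists>g'. g' < g \<and> const_on u g' g)"

text \<open>A factorization u = v w with v of length g is determined by the split
  point g \<le> a: v is u restricted to {..<g}, and w is u restricted to the
  interval {g..<a} (re-indexed by its order type).\<close>

definition good_split :: "('i::wellorder \<Rightarrow> 'u) \<Rightarrow> 'i \<Rightarrow> 'i \<Rightarrow> bool" where
  "good_split u a g \<longleftrightarrow> g \<le> a \<and> limit_ord g \<and> \<not> ult_const u g \<and> finite (u ` {g..<a})"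

end

theory Submission
  imports Defs
begin

lemma no_two:
  fixes u :: "'i::wellorder \<Rightarrow> 'u::linorder" and a :: 'i
  assumes dn: "densely_nonincr u a"
    and fin: "finite (u ` {g1..<a})"
    and g2a: "g2 \<le> a" and nuc: "\<not> ult_const u g2" and lt: "g1 < g2"
  shows False
proof -
  define S where "S = u ` {g1..<g2}"
  have finS: "finite S" unfolding S_def
    by (rule finite_subset[OF _ fin]) (use g2a in auto)
  define C where "C = {v \<in> S. \<forall>x<g2. \<exists>y. x \<le> y \<and> y < g2 \<and> u y = v}"
  have "\<forall>v\<in>S - C. \<exists>x. x < g2 \<and> (\<forall>y. x \<le> y \<and> y < g2 \<longrightarrow> u y \<noteq> v)"
    unfolding C_def by auto
  then obtain X where X: "\<And>v. v \<in> S - C \<Longrightarrow> X v < g2 \<and> (\<forall>y. X v \<le> y \<and> y < g2 \<longrightarrow> u y \<noteq> v)"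
    by metis
  define g0 where "g0 = Max (insert g1 (X ` (S - C)))"
  have finI: "finite (insert g1 (X ` (S - C)))" using finS by auto
  have g0lt: "g0 < g2" unfolding g0_def using finI lt X
    by (subst Max_less_iff) auto
  have g1g0: "g1 \<le> g0" unfolding g0_def using finI by auto
  have inC: "u y \<in> C" if "g0 \<le> y" "y < g2" for y
  proof (rule ccontr)
    assume "u y \<notin> C"
    moreover have "u y \<in> S" unfolding S_def using that g1g0 by auto
    ultimately have "X (u y) \<le> g0" unfolding g0_def using finI by auto
    hence "X (u y) \<le> y" using that by auto
    with X[of "u y"] \<open>u y \<notin> C\<close> \<open>u y \<in> S\<close> that show False by blast
  qed
  have finC: "finite C" using finS unfolding C_def by auto
  have neC: "C \<noteq> {}" using inC[of g0] g0lt by auto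
  define vm where "vm = Min C"
  have vmC: "vm \<in> C" unfolding vm_def using finC neC by auto
  have vmle: "\<And>y. g0 \<le> y \<Longrightarrow> y < g2 \<Longrightarrow> vm \<le> u y"
    unfolding vm_def using finC inC by auto
  obtain p where p: "g0 \<le> p" "p < g2" "u p = vm"
    using vmC g0lt unfolding C_def by blast
  have "\<not> const_on u p g2" using nuc p unfolding ult_const_def by auto
  then obtain q0 where q0: "p \<le> q0" "q0 < g2" "u q0 \<noteq> u p" unfolding const_on_def by auto
  define q where "q = (LEAST q. p \<le> q \<and> q < g2 \<and> u q \<noteq> u p)"
  have q: "p \<le> q" "q < g2" "u q \<noteq> u p"
  proof -
    have "p \<le> q0 \<and> q0 < g2 \<and> u q0 \<noteq> u p" using q0 by auto
    from LeastI[of "\<lambda>q. p \<le> q \<and> q < g2 \<and> u q \<noteq> u p", OF this]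
    show "p \<le> q" "q < g2" "u q \<noteq> u p" unfolding q_def by auto
  qed
  have qmin: "u b = u p" if "p \<le> b" "b < q" for b
  proof -
    have "\<not> (p \<le> b \<and> b < g2 \<and> u b \<noteq> u p)"
      using not_less_Least[of b "\<lambda>q. p \<le> q \<and> q < g2 \<and> u q \<noteq> u p"] that(2)
      unfolding q_def by blast
    moreover have "b < g2" using that q by auto
    ultimately show ?thesis using that by blast
  qed
  define s where "s = (LEAST x. q < x)"
  have qa: "q < a" using q g2a by auto
  have qs: "q < s" unfolding s_def by (rule LeastI[of "\<lambda>x. q < x", OF qa])
  have sa: "s \<le> a" unfolding s_def by (rule Least_le[of "\<lambda>x. q < x", OF qa])
  have ps: "p < s" using q qs by auto
  have bs: "\<And>b'. b' < s \<Longrightarrow> b' \<le> q"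
    unfolding s_def using not_less_Least[of _ "\<lambda>x. q < x"] by (simp add: not_less)
  have "\<not> const_on u p s" using q qs unfolding const_on_def by auto
  then obtain b b' where bb: "p \<le> b" "b < b'" "b' < s" "u b > u b'"
    using dn ps sa unfolding densely_nonincr_def by blast
  have "b' \<le> q" using bs bb by auto
  hence "b < q" using bb by auto
  hence "u b = vm" using qmin bb p by auto
  moreover have "vm \<le> u b'" using vmle bb p \<open>b' \<le> q\<close> q by auto
  ultimately show False using bb by auto
qed

theorem mainTheorem14:
  fixes u :: "'i::wellorder \<Rightarrow> 'u::linorder" and a :: 'i
  assumes "countable {..<a}"
    and "densely_nonincr u a"
    and "infinite (u ` {..<a})"
  shows "\<exists>!g. good_split u a g"
proof
  let ?P = "\<lambda>x. x \<le> a \<and> finite (u ` {x..<a})"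
  define g where "g = (LEAST x. ?P x)"
  have Pa: "?P a" by auto
  have Pg: "?P g" unfolding g_def by (rule LeastI[of ?P a, OF Pa])
  have minP: "\<And>x. x < g \<Longrightarrow> \<not> ?P x" unfolding g_def by (rule not_less_Least)
  have ex: "\<exists>b. b < g"
  proof (rule ccontr)
    assume "\<nexists>b. b < g"
    hence "u ` {..<a} \<subseteq> u ` {g..<a}" by (auto simp: not_less)
    thus False using Pg assms(3) finite_subset by blast
  qed
  have lim: "\<exists>b'. b < b' \<and> b' < g" if "b < g" for b
  proof (rule ccontr)
    assume nb: "\<nexists>b'. b < b' \<and> b' < g"
    have "u ` {b..<a} \<subseteq> insert (u b) (u ` {g..<a})"
    proof
      fix z assume "z \<in> u ` {b..<a}"
      then obtain x where x: "b \<le> x" "x < a" "z = u x" by auto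
      show "z \<in> insert (u b) (u ` {g..<a})"
      proof (cases "x = b")
        case False
        hence "b < x" using x by auto
        hence "\<not> x < g" using nb by blast
        hence "g \<le> x" by simp
        thus ?thesis using x by auto
      qed (use x in auto)
    qed
    hence "finite (u ` {b..<a})" using Pg finite_subset by blast
    moreover have "b \<le> a" using that Pg by auto
    ultimately show False using minP[OF that] by auto
  qed
  have nuc: "\<not> ult_const u g"
  proof
    assume "ult_const u g"
    then obtain g' where g': "g' < g" "const_on u g' g" unfolding ult_const_def by auto
    have "u ` {g'..<a} \<subseteq> insert (u g') (u ` {g..<a})"
    proof
      fix z assume "z \<in> u ` {g'..<a}"
      then obtain x where x: "g' \<le> x" "x < a" "z = u x" by auto
      show "z \<in> insert (u g') (u ` {g..<a})"
      proof (cases "x < g")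
        case True
        hence "u x = u g'" using g'(2) x unfolding const_on_def by blast
        thus ?thesis using x by simp
      next
        case False thus ?thesis using x by (auto simp: not_less)
      qed
    qed
    hence "finite (u ` {g'..<a})" using Pg finite_subset by blast
    moreover have "g' \<le> a" using g' Pg by auto
    ultimately show False using minP[OF g'(1)] by auto
  qed
  show "good_split u a g" unfolding good_split_def limit_ord_def
    using Pg ex lim nuc by blast
  fix g2 assume g2: "good_split u a g2"
  show "g2 = g"
  proof (rule ccontr)
    assume "g2 \<noteq> g"
    hence "g2 < g \<or> g < g2" by auto
    thus False
    proof
      assume "g2 < g" thus False using no_two[OF assms(2), of g2 g] g2 Pg nuc
        unfolding good_split_def by auto
    next
      assume "g < g2" thus False using no_two[OF assms(2), of g g2] g2 Pg
        unfolding good_split_def by auto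
    qed
  qed
qed

end
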